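(* Let $\mu$ be a (complex or signed) Borel measure on $\mathbb{R}^{k+l}=\mathbb{R}^k\times\mathbb{R}^l$ and let $\alpha>0$. Suppose that $\mu(I\times A)=0$ for every parallelepiped $I\subset\mathbb{R}^k$ and every Borel set $A\subset\mathbb{R}^l$ with $\dim A<\alpha$. Then $\dim\mu\ge\alpha$.
   Context: $\dim A$ denotes Hausdorff dimension. For a measure $\mu$, $\dim\mu=\inf\{\gamma : \text{there is a Borel set } F \text{ with } \mu(F)\ne0 \text{ and } \dim F\le\gamma\}$. *)

theory Defs
  imports "HOL-Analysis.Analysis"
begin

definition hausdorff_pre :: "real \<Rightarrow> real \<Rightarrow> 'a::metric_space set \<Rightarrow> ennreal" where
  "hausdorff_pre s \<delta> A =
     (INF U \<in> {U :: nat \<Rightarrow> 'a set. A \<subseteq> (\<Union>i. U i) \<and> (\<forall>i. bounded (U i) \<and> diameter (U i) \<le> \<delta>)}.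
        (\<Sum>i. ennreal (diameter (U i) powr s)))"

definition hausdorff_measure :: "real \<Rightarrow> 'a::metric_space set \<Rightarrow> ennreal" where
  "hausdorff_measure s A = (SUP \<delta> \<in> {0<..}. hausdorff_pre s \<delta> A)"

definition hausdorff_dim :: "'a::metric_space set \<Rightarrow> ereal" where
  "hausdorff_dim A = Inf {ereal s | s. s > 0 \<and> hausdorff_measure s A = 0}"

definition complex_measure :: "'a measure \<Rightarrow> ('a set \<Rightarrow> complex) \<Rightarrow> bool" where
  "complex_measure M \<mu> \<longleftrightarrow>
     (\<forall>A :: nat \<Rightarrow> 'a set. range A \<subseteq> sets M \<longrightarrow> disjoint_family A \<longrightarrow>
        (\<lambda>n. \<mu> (A n)) sums \<mu> (\<Union>n. A n))"

definition measure_dim :: "'a::metric_space measure \<Rightarrow> ('a set \<Rightarrow> complex) \<Rightarrow> ereal" where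
  "measure_dim M \<mu> =
     Inf {ereal \<gamma> | \<gamma>. \<exists>F \<in> sets M. \<mu> F \<noteq> 0 \<and> hausdorff_dim F \<le> ereal \<gamma>}"

end

theory Submission
  imports Defs
begin


lemma cm_empty:
  assumes "complex_measure M \<mu>" "{} \<in> sets M"
  shows "\<mu> {} = 0"
proof -
  have "(\<lambda>n. \<mu> {}) sums \<mu> (\<Union>n::nat. {})"
    using assms unfolding complex_measure_def by (auto simp: disjoint_family_on_def)
  then have "summable (\<lambda>n::nat. \<mu> {})" by (auto simp: sums_iff)
  then have "(\<lambda>n::nat. \<mu> {}) \<longlonglongrightarrow> 0" by (rule summable_LIMSEQ_zero)
  then show ?thesis using LIMSEQ_unique tendsto_const by blast
qed

lemma cm_union2:
  assumes "complex_measure M \<mu>" "P \<in> sets M" "Q \<in> sets M" "P \<inter> Q = {}"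
  shows "\<mu> (P \<union> Q) = \<mu> P + \<mu> Q"
proof -
  define A where "A = (\<lambda>i::nat. if i = 0 then P else if i = 1 then Q else {})"
  have e: "\<mu> {} = 0" using cm_empty assms by (metis sets.empty_sets)
  have "(\<lambda>n. \<mu> (A n)) sums \<mu> (\<Union>n. A n)"
    using assms unfolding complex_measure_def
    apply (elim allE[of _ A])
    by (auto simp: A_def disjoint_family_on_def split: if_splits)
  moreover have "(\<Union>n. A n) = P \<union> Q"
    by (auto simp: A_def split: if_splits)
  moreover have "(\<lambda>n. \<mu> (A n)) sums (\<Sum>n\<in>{0,1}. \<mu> (A n))"
    by (rule sums_finite) (auto simp: A_def e)
  ultimately show ?thesis by (simp add: sums_unique2 A_def)
qed

lemma cm_diff:
  assumes "complex_measure M \<mu>" "P \<in> sets M" "Q \<in> sets M" "Q \<subseteq> P"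
  shows "\<mu> (P - Q) = \<mu> P - \<mu> Q"
proof -
  have "\<mu> ((P - Q) \<union> Q) = \<mu> (P - Q) + \<mu> Q"
    by (rule cm_union2) (use assms in auto)
  moreover have "(P - Q) \<union> Q = P" using assms by auto
  ultimately show ?thesis by simp
qed

lemma cm_zero_union:
  fixes A :: "nat \<Rightarrow> _"
  assumes "complex_measure M \<mu>" "range A \<subseteq> sets M" "disjoint_family A" "\<And>n. \<mu> (A n) = 0"
  shows "\<mu> (\<Union>n. A n) = 0"
proof -
  have "(\<lambda>n. \<mu> (A n)) sums \<mu> (\<Union>n. A n)"
    using assms unfolding complex_measure_def by blast
  then have "(\<lambda>n. 0) sums \<mu> (\<Union>n. A n)" using assms(4) by simp
  then show ?thesis using sums_zero sums_unique2 by metis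
qed

lemma borel_cbox:
  "sets (borel::'c::euclidean_space measure) = sigma_sets UNIV (range (\<lambda>(a,b). cbox a b))"
proof
  show "sigma_sets UNIV (range (\<lambda>(a,b). cbox a b)) \<subseteq> sets (borel::'c measure)"
  proof -
    have "range (\<lambda>(a,b). cbox a b) \<subseteq> sets (borel::'c measure)" by (auto simp: cbox_borel)
    then show ?thesis using sets.sigma_sets_subset[of "range (\<lambda>(a,b). cbox a b)" "borel::'c measure"] by simp
  qed
next
  let ?G = "range (\<lambda>(a,b). cbox a b) :: 'c set set"
  interpret S: sigma_algebra UNIV "sigma_sets UNIV ?G"
    by (rule sigma_algebra_sigma_sets) auto
  have "M \<in> sigma_sets UNIV ?G" if "open M" for M :: "'c set"
  proof -
    define a' where "a' \<equiv> \<lambda>f :: 'c \<Rightarrow> real \<times> real. (\<Sum>(i::'c)\<in>Basis. fst (f i) *\<^sub>R i)"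
    define b' where "b' \<equiv> \<lambda>f :: 'c \<Rightarrow> real \<times> real. (\<Sum>(i::'c)\<in>Basis. snd (f i) *\<^sub>R i)"
    define I where "I \<equiv> {f\<in>Basis \<rightarrow>\<^sub>E \<rat> \<times> \<rat>. cbox (a' f) (b' f) \<subseteq> M}"
    have "x \<in> (\<Union>f\<in>I. cbox (a' f) (b' f))" if "x \<in> M" for x
    proof -
      obtain e where e: "e > 0" "ball x e \<subseteq> M"
        using openE[OF \<open>open M\<close> \<open>x \<in> M\<close>] by auto
      moreover obtain a b where ab:
        "\<forall>i \<in> Basis. a \<bullet> i \<in> \<rat> \<and> b \<bullet> i \<in> \<rat>"
        "x \<in> cbox a b" "cbox a b \<subseteq> ball x e"
        using rational_cboxes[OF e(1)] by metis
      ultimately show ?thesis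
         by (intro UN_I[of "\<lambda>i\<in>Basis. (a \<bullet> i, b \<bullet> i)"])
            (auto simp: euclidean_representation I_def a'_def b'_def)
    qed
    then have "M = (\<Union>f\<in>I. cbox (a' f) (b' f))" by (auto simp: I_def)
    moreover have "countable I" unfolding I_def
      by (rule countable_subset[of _ "Basis \<rightarrow>\<^sub>E \<rat> \<times> \<rat>"]) (auto simp: countable_PiE countable_rat)
    moreover have "(\<lambda>f. cbox (a' f) (b' f)) ` I \<subseteq> sigma_sets UNIV ?G"
    proof
      fix X assume "X \<in> (\<lambda>f. cbox (a' f) (b' f)) ` I"
      then obtain f where "X = cbox (a' f) (b' f)" by auto
      then have "X \<in> ?G" by (auto intro!: image_eqI[of _ _ "(a' f, b' f)"])
      then show "X \<in> sigma_sets UNIV ?G" by (rule sigma_sets.Basic)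
    qed
    ultimately show ?thesis
      using S.countable_Union[of "(\<lambda>f. cbox (a' f) (b' f)) ` I"] by simp
  qed
  then show "sets (borel::'c measure) \<subseteq> sigma_sets UNIV ?G"
    unfolding sets_borel by (intro S.sigma_sets_subset) auto
qed



lemma cbox_mono_n: "(m::nat) \<le> n \<Longrightarrow> cbox (- (real m *\<^sub>R One)) (real m *\<^sub>R One) \<subseteq> (cbox (- (real n *\<^sub>R One)) (real n *\<^sub>R One) :: 'a::euclidean_space set)"
proof -
  assume "m \<le> n" then have r: "real m \<le> real n" by simp
  show ?thesis
  proof (rule subsetI)
    fix x :: 'a assume "x \<in> cbox (- (real m *\<^sub>R One)) (real m *\<^sub>R One)"
    then have h: "\<forall>i\<in>Basis. - real m \<le> x \<bullet> i \<and> x \<bullet> i \<le> real m" by (simp add: mem_box)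
    show "x \<in> cbox (- (real n *\<^sub>R One)) (real n *\<^sub>R One)" unfolding mem_box
    proof (intro ballI)
      fix i :: 'a assume i: "i \<in> Basis"
      then have "- real m \<le> x \<bullet> i \<and> x \<bullet> i \<le> real m" using h by auto
      then show "(- (real n *\<^sub>R One)) \<bullet> i \<le> x \<bullet> i \<and> x \<bullet> i \<le> (real n *\<^sub>R One) \<bullet> i"
        using r i by auto
    qed
  qed
qed
lemma cb: "cbox u v \<in> range (\<lambda>(a,b). cbox a b)"
  by (metis (no_types) case_prod_conv rangeI)
lemma Int_stable_cbox: "Int_stable (range (\<lambda>(a,b). cbox a b) :: 'a::euclidean_space set set)"
  unfolding Int_stable_def
proof (intro ballI)
  fix X Y :: "'a set" assume "X \<in> range (\<lambda>(a,b). cbox a b)" "Y \<in> range (\<lambda>(a,b). cbox a b)"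
  then obtain a b c d where "X = cbox a b" "Y = cbox c d" by auto
  then show "X \<inter> Y \<in> range (\<lambda>(a,b). cbox a b)" using Int_interval[of a b c d] cb by simp
qed

lemma key:
  fixes \<mu> :: "('a::euclidean_space \<times> 'b::euclidean_space) set \<Rightarrow> complex"
  assumes cm: "complex_measure borel \<mu>" and A: "A \<in> sets borel"
    and hyp: "\<And>a b B. B \<in> sets borel \<Longrightarrow> B \<subseteq> A \<Longrightarrow> \<mu> (cbox a b \<times> B) = 0"
    and F: "F \<in> sets borel"
  shows "\<mu> (F \<inter> (UNIV \<times> A)) = 0"
proof -
  let ?X = "UNIV \<times> A :: ('a \<times> 'b) set"
  have X: "?X \<in> sets borel" using A by (intro borel_Times) auto
  have e: "\<mu> {} = 0" using cm_empty[OF cm] by simp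
  define S where "S = (\<lambda>n::nat. cbox (- (real n *\<^sub>R One)) (real n *\<^sub>R One) \<times> A :: ('a \<times> 'b) set)"
  have Sb: "S n \<in> sets borel" for n unfolding S_def using A by (intro borel_Times) auto
  have S0: "\<mu> (S n) = 0" for n unfolding S_def by (rule hyp[OF A]) auto
  have monoS: "mono S"
  proof (rule monoI)
    fix m n :: nat assume "m \<le> n"
    then show "S m \<subseteq> S n" unfolding S_def using cbox_mono_n[of m n, where 'a='a] by auto
  qed
  have US: "(\<Union>n. S n) = ?X"
  proof
    show "?X \<subseteq> (\<Union>n. S n)"
    proof
      fix p assume p: "p \<in> ?X"
      obtain n :: nat where n: "norm (fst p) \<le> real n" using real_arch_simple by blast
      have "fst p \<in> cbox (- (real n *\<^sub>R One)) (real n *\<^sub>R One)"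
        unfolding mem_box
      proof
        fix i :: 'a assume i: "i \<in> Basis"
        have "\<bar>fst p \<bullet> i\<bar> \<le> norm (fst p)" using i by (rule Basis_le_norm)
        then show "(- (real n *\<^sub>R One)) \<bullet> i \<le> fst p \<bullet> i \<and> fst p \<bullet> i \<le> (real n *\<^sub>R One) \<bullet> i"
          using i n by auto
      qed
      then show "p \<in> (\<Union>n. S n)" using p unfolding S_def by (cases p) auto
    qed
  qed (auto simp: S_def)
  have DX: "\<mu> (disjointed S n) = 0" for n
  proof (cases n)
    case 0 then show ?thesis using S0 by simp
  next
    case (Suc m)
    then have "\<mu> (disjointed S n) = \<mu> (S (Suc m)) - \<mu> (S m)"
      using disjointed_mono[OF monoS] cm_diff[OF cm Sb Sb] monoS by (simp add: mono_def)
    then show ?thesis using S0 by simp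
  qed
  have muX: "\<mu> ?X = 0"
  proof -
    have "range (disjointed S) \<subseteq> sets borel"
      using Sb by (intro sets.range_disjointed_sets) auto
    then have "\<mu> (\<Union>n. disjointed S n) = 0"
      by (rule cm_zero_union[OF cm _ disjoint_family_disjointed DX])
    then show ?thesis by (simp add: UN_disjointed_eq US)
  qed
  let ?G = "range (\<lambda>(a,b). cbox a b) :: ('a \<times> 'b) set set"
  have Fs: "F \<in> sigma_sets UNIV ?G" using F borel_cbox by blast
  have ist: "Int_stable ?G"
    by (rule Int_stable_cbox)
  show ?thesis
  proof (rule sigma_sets_induct_disjoint[OF ist _ Fs, where P="\<lambda>E. \<mu> (E \<inter> ?X) = 0"])
    show "?G \<subseteq> Pow UNIV" by auto
  next
    fix E assume "E \<in> ?G"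
    then obtain p q where E: "E = cbox p q" by auto
    have cp: "cbox p q = cbox (fst p) (fst q) \<times> cbox (snd p) (snd q)"
      by (metis cbox_Pair_eq prod.collapse)
    have "E \<inter> ?X = cbox (fst p) (fst q) \<times> (cbox (snd p) (snd q) \<inter> A)"
      unfolding E cp Times_Int_Times by simp
    moreover have "cbox (snd p) (snd q) \<inter> A \<in> sets borel" using A by simp
    ultimately show "\<mu> (E \<inter> ?X) = 0" using hyp[of "cbox (snd p) (snd q) \<inter> A"] by simp
  next
    show "\<mu> ({} \<inter> ?X) = 0" using e by simp
  next
    fix E assume E1: "E \<in> sigma_sets UNIV ?G" and E2: "\<mu> (E \<inter> ?X) = 0"
    have Eb: "E \<in> sets borel" using E1 borel_cbox by blast
    have "(UNIV - E) \<inter> ?X = ?X - (E \<inter> ?X)" by auto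
    moreover have "E \<inter> ?X \<in> sets borel" using Eb X by (rule sets.Int)
    moreover have "E \<inter> ?X \<subseteq> ?X" by blast
    ultimately have "\<mu> ((UNIV - E) \<inter> ?X) = \<mu> ?X - \<mu> (E \<inter> ?X)"
      using cm_diff[OF cm X] by metis
    then show "\<mu> ((UNIV - E) \<inter> ?X) = 0" using E2 muX by simp
  next
    fix E :: "nat \<Rightarrow> _" assume U1: "disjoint_family E" and U2: "range E \<subseteq> sigma_sets UNIV ?G"
      and U3: "\<And>i. \<mu> (E i \<inter> ?X) = 0"
    have r: "range (\<lambda>i. E i \<inter> ?X) \<subseteq> sets borel"
    proof
      fix Y assume "Y \<in> range (\<lambda>i. E i \<inter> ?X)"
      then obtain i where Y: "Y = E i \<inter> ?X" by blast
      have "E i \<in> sets borel" using U2 borel_cbox by blast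
      then show "Y \<in> sets borel" unfolding Y using X by (rule sets.Int)
    qed
    have d: "disjoint_family (\<lambda>i. E i \<inter> ?X)"
      using U1 by (auto simp: disjoint_family_on_def)
    have h: "\<mu> (\<Union>i. E i \<inter> ?X) = 0"
      by (rule cm_zero_union[OF cm r d U3])
    have eq: "(\<Union>i. E i) \<inter> ?X = (\<Union>i. E i \<inter> ?X)" by blast
    show "\<mu> ((\<Union>i. E i) \<inter> ?X) = 0" unfolding eq by (rule h)
  qed
qed



lemma hd_lt:
  assumes "hausdorff_dim F < ereal \<alpha>"
  obtains s where "s > 0" "s < \<alpha>" "hausdorff_measure s F = 0"
proof -
  from assms obtain x where "x \<in> {ereal s | s. s > 0 \<and> hausdorff_measure s F = 0}" "x < ereal \<alpha>"
    unfolding hausdorff_dim_def Inf_less_iff by blast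
  then show ?thesis using that by auto
qed

lemma proj_null:
  fixes F :: "('a::euclidean_space \<times> 'b::euclidean_space) set"
  assumes s: "s > 0" and H: "hausdorff_measure s F = 0"
  obtains A where "A \<in> sets borel" "F \<subseteq> UNIV \<times> A" "\<And>B. B \<subseteq> A \<Longrightarrow> hausdorff_measure s B = 0"
proof -
  have pre0: "hausdorff_pre s \<delta> F = 0" if "\<delta> > 0" for \<delta>
  proof -
    have "hausdorff_pre s \<delta> F \<le> hausdorff_measure s F"
      unfolding hausdorff_measure_def using that by (intro SUP_upper) auto
    then show ?thesis using H by simp
  qed
  have ex: "\<forall>n. \<exists>U. F \<subseteq> (\<Union>i. U i) \<and> (\<forall>i. bounded (U i) \<and> diameter (U i) \<le> 1 / Suc n) \<and>
      (\<Sum>i. ennreal (diameter (U i) powr s)) < ennreal (1 / Suc n)"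
  proof
    fix n
    have "hausdorff_pre s (1 / Suc n) F < ennreal (1 / Suc n)" using pre0[of "1 / Suc n"] by simp
    then show "\<exists>U. F \<subseteq> (\<Union>i. U i) \<and> (\<forall>i. bounded (U i) \<and> diameter (U i) \<le> 1 / Suc n) \<and>
      (\<Sum>i. ennreal (diameter (U i) powr s)) < ennreal (1 / Suc n)" unfolding hausdorff_pre_def INF_less_iff by blast
  qed
  obtain U where U0: "\<forall>n. F \<subseteq> (\<Union>i. U n i) \<and> (\<forall>i. bounded (U n i) \<and> diameter (U n i) \<le> 1 / Suc n) \<and>
      (\<Sum>i. ennreal (diameter (U n i) powr s)) < ennreal (1 / Suc n)"
    using choice[OF ex] by blast
  then have U: "\<And>n. F \<subseteq> (\<Union>i. U n i)" "\<And>n i. bounded (U n i)"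
    "\<And>n i. diameter (U n i) \<le> 1 / Suc n"
    "\<And>n. (\<Sum>i. ennreal (diameter (U n i) powr s)) < ennreal (1 / Suc n)"
    by auto
  define V where "V n i = snd ` closure (U n i)" for n i
  have Vc: "compact (V n i)" for n i
    unfolding V_def using U(2) by (intro compact_continuous_image continuous_intros) auto
  have Vb: "V n i \<in> sets borel" for n i
    using Vc compact_imp_closed borel_closed by blast
  have Vd: "diameter (V n i) \<le> diameter (U n i)" for n i
  proof (cases "V n i = {}")
    case True then show ?thesis using diameter_ge_0[OF U(2)] by simp
  next
    case False
    show ?thesis
    proof (rule diameter_le)
      show "V n i \<noteq> {} \<or> 0 \<le> diameter (U n i)" using False by simp
    next
      fix x y assume "x \<in> V n i" "y \<in> V n i"
      then obtain p q where pq: "p \<in> closure (U n i)" "q \<in> closure (U n i)" "x = snd p" "y = snd q"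
        unfolding V_def by auto
      have "norm (x - y) = dist (snd p) (snd q)" using pq by (simp add: dist_norm)
      also have "\<dots> \<le> dist p q" by (rule dist_snd_le)
      also have "\<dots> \<le> diameter (closure (U n i))"
        using pq U(2) by (intro diameter_bounded_bound) auto
      also have "\<dots> = diameter (U n i)" using U(2) by (rule diameter_closure)
      finally show "norm (x - y) \<le> diameter (U n i)" .
    qed
  qed
  define A where "A = (\<Inter>n. \<Union>i. V n i)"
  have Ab: "A \<in> sets borel"
    unfolding A_def using Vb by (intro sets.countable_INT sets.countable_UN) auto
  have FA: "F \<subseteq> UNIV \<times> A"
  proof
    fix p assume p: "p \<in> F"
    have "snd p \<in> (\<Union>i. V n i)" for n
    proof -
      obtain i where "p \<in> U n i" using U(1) p by blast
      then have "p \<in> closure (U n i)" using closure_subset by blast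
      then show ?thesis unfolding V_def by blast
    qed
    then show "p \<in> UNIV \<times> A" unfolding A_def by (cases p) auto
  qed
  have BA: "hausdorff_measure s B = 0" if B: "B \<subseteq> A" for B
  proof -
    have "hausdorff_pre s \<delta> B = 0" if d: "\<delta> > 0" for \<delta>
    proof -
      have h: "hausdorff_pre s \<delta> B \<le> 0 + ennreal e" if e: "e > 0" for e
      proof -
        obtain n :: nat where n: "1 / Suc n < min e \<delta>"
          using e d by (metis min_less_iff_conj nat_approx_posE)
        have cov: "V n \<in> {U :: nat \<Rightarrow> 'b set. B \<subseteq> (\<Union>i. U i) \<and> (\<forall>i. bounded (U i) \<and> diameter (U i) \<le> \<delta>)}"
        proof -
          have "B \<subseteq> (\<Union>i. V n i)" using B unfolding A_def by blast
          moreover have "bounded (V n i)" for i using Vc compact_imp_bounded by blast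
          moreover have "diameter (V n i) \<le> \<delta>" for i
            using Vd[of n i] U(3)[of n i] n by linarith
          ultimately show ?thesis by blast
        qed
        have "hausdorff_pre s \<delta> B \<le> (\<Sum>i. ennreal (diameter (V n i) powr s))"
          unfolding hausdorff_pre_def by (rule INF_lower[OF cov])
        also have "\<dots> \<le> (\<Sum>i. ennreal (diameter (U n i) powr s))"
        proof (rule suminf_le[OF _ summableI summableI])
          fix i
          have "0 \<le> diameter (V n i)" using Vc compact_imp_bounded diameter_ge_0 by blast
          then have "diameter (V n i) powr s \<le> diameter (U n i) powr s"
            using Vd[of n i] s by (intro powr_mono2) auto
          then show "ennreal (diameter (V n i) powr s) \<le> ennreal (diameter (U n i) powr s)"
            by (rule ennreal_leI)
        qed
        also have "\<dots> \<le> ennreal (1 / Suc n)" using U(4)[of n] by simp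
        also have "\<dots> \<le> ennreal e" using n by (intro ennreal_leI) simp
        finally show ?thesis by simp
      qed
      have "hausdorff_pre s \<delta> B \<le> 0"
        apply (rule ennreal_le_epsilon) apply (rule h) apply assumption done
      then show ?thesis by simp
    qed
    then show ?thesis unfolding hausdorff_measure_def by simp
  qed
  show ?thesis using that Ab FA BA by blast
qed


theorem mainTheorem5:
  fixes \<mu> :: "((real,'k::finite) vec \<times> (real,'l::finite) vec) set \<Rightarrow> complex" and \<alpha> :: real
  assumes "complex_measure borel \<mu>"
    and "\<alpha> > 0"
    and "\<And>(a :: real^'k) b (A :: (real^'l) set).
           A \<in> sets borel \<Longrightarrow> hausdorff_dim A < ereal \<alpha> \<Longrightarrow> \<mu> (cbox a b \<times> A) = 0"
  shows "measure_dim borel \<mu> \<ge> ereal \<alpha>"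
  unfolding measure_dim_def
proof (rule Inf_greatest)
  fix x assume "x \<in> {ereal \<gamma> |\<gamma>. \<exists>F\<in>sets borel. \<mu> F \<noteq> 0 \<and> hausdorff_dim F \<le> ereal \<gamma>}"
  then obtain \<gamma> F where x: "x = ereal \<gamma>" and F: "F \<in> sets borel" "\<mu> F \<noteq> 0" "hausdorff_dim F \<le> ereal \<gamma>"
    by blast
  show "ereal \<alpha> \<le> x"
  proof (rule ccontr)
    assume "\<not> ereal \<alpha> \<le> x"
    then have "ereal \<gamma> < ereal \<alpha>" using x by auto
    then have "hausdorff_dim F < ereal \<alpha>" using F(3) by (rule le_less_trans[rotated])
    then obtain s where s: "s > 0" "s < \<alpha>" "hausdorff_measure s F = 0" by (rule hd_lt)
    obtain A where A: "A \<in> sets borel" "F \<subseteq> UNIV \<times> A" "\<And>B. B \<subseteq> A \<Longrightarrow> hausdorff_measure s B = 0"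
      using proj_null[OF s(1) s(3)] by blast
    have "\<mu> (F \<inter> (UNIV \<times> A)) = 0"
    proof (rule key[OF assms(1) A(1) _ F(1)])
      fix a b B assume B: "B \<in> sets borel" "B \<subseteq> A"
      have "hausdorff_dim B \<le> ereal s" unfolding hausdorff_dim_def
        using A(3)[OF B(2)] s(1) by (intro Inf_lower) auto
      also have "\<dots> < ereal \<alpha>" using s(2) by simp
      finally show "\<mu> (cbox a b \<times> B) = 0" using assms(3) B(1) by blast
    qed
    moreover have "F \<inter> (UNIV \<times> A) = F" using A(2) by blast
    ultimately show False using F(2) by simp
  qed
qed

end
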